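(* Let $K$ be a valued field with valuation $v_K:K\to\mathbb{T}$, let $M$ be a commutative monoid, and let $I\subseteq K[M]$ be an ideal containing no element of $M$. Let $A$ be the tropicalization of $K[M]/I$, i.e. the quotient of $\mathbb{T}[M]$ by the congruence generated by the bend relations of elements of $I$. Then $A$ has no nontrivial zero-divisors; in particular $A$ is irreducible.
   Context: $\mathbb{T}=\mathbb{R}\cup\{-\infty\}$ with addition $\max$ and multiplication the usual addition, $0_{\mathbb{T}}=-\infty$; $v_K(a)=-\infty$ iff $a=0$. For $f=\sum_i a_i[m_i]\in I$ with the $a_i\neq0$ and distinct $m_i\in M$, the bend relations of $f$ are, for each index $i$, $\sum_j v_K(a_j)[m_j]\sim\sum_{j\neq i}v_K(a_j)[m_j]$ in $\mathbb{T}[M]$. A semiring is irreducible if whenever $xy$ is nilpotent, $x$ or $y$ is nilpotent. *)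

theory Defs
  imports Complex_Main "HOL-Library.Poly_Mapping"
begin

datatype trop = NegInf | Fin real

instantiation trop :: linorder
begin
fun less_eq_trop :: "trop \<Rightarrow> trop \<Rightarrow> bool" where
  "less_eq_trop NegInf _ = True"
| "less_eq_trop (Fin _) NegInf = False"
| "less_eq_trop (Fin a) (Fin b) = (a \<le> b)"
definition less_trop :: "trop \<Rightarrow> trop \<Rightarrow> bool" where
  "less_trop x y = (x \<le> y \<and> \<not> y \<le> x)"
instance
proof
  fix x y z :: trop
  show "(x < y) = (x \<le> y \<and> \<not> y \<le> x)" by (simp add: less_trop_def)
  show "x \<le> x" by (cases x) auto
  show "x \<le> y \<Longrightarrow> y \<le> z \<Longrightarrow> x \<le> z" by (cases x; cases y; cases z) auto
  show "x \<le> y \<Longrightarrow> y \<le> x \<Longrightarrow> x = y" by (cases x; cases y) auto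
  show "x \<le> y \<or> y \<le> x" by (cases x; cases y) auto
qed
end

instantiation trop :: comm_semiring_1
begin
definition zero_trop :: trop where "zero_trop = NegInf"
definition one_trop :: trop where "one_trop = Fin 0"
definition plus_trop :: "trop \<Rightarrow> trop \<Rightarrow> trop" where "plus_trop x y = max x y"
fun times_trop :: "trop \<Rightarrow> trop \<Rightarrow> trop" where
  "times_trop (Fin a) (Fin b) = Fin (a + b)"
| "times_trop _ _ = NegInf"
instance
proof
  fix a b c :: trop
  show "a + b + c = a + (b + c)" by (simp add: plus_trop_def max.assoc)
  show "a + b = b + a" by (simp add: plus_trop_def max.commute)
  show "0 + a = a" by (cases a) (auto simp: plus_trop_def zero_trop_def max_def)
  show "a * b * c = a * (b * c)" by (cases a; cases b; cases c) auto
  show "a * b = b * a" by (cases a; cases b) auto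
  show "1 * a = a" by (cases a) (auto simp: one_trop_def)
  show "(a + b) * c = a * c + b * c"
    by (cases a; cases b; cases c) (auto simp: plus_trop_def max_def)
  show "0 * a = 0" by (simp add: zero_trop_def)
  show "a * 0 = 0" by (cases a) (auto simp: zero_trop_def)
  show "(0::trop) \<noteq> 1" by (simp add: zero_trop_def one_trop_def)
qed
end

definition valuation :: "('k::field \<Rightarrow> trop) \<Rightarrow> bool" where
  "valuation v \<longleftrightarrow>
     (\<forall>a. v a = NegInf \<longleftrightarrow> a = 0) \<and>
     (\<forall>a b. v (a * b) = v a * v b) \<and>
     (\<forall>a b. v (a + b) \<le> max (v a) (v b))"

text \<open>K[M] is rendered as finitely supported maps M to K, with M a commutative monoid written additively
  (so the basis element [m] is \<open>Poly_Mapping.single m 1\<close>); T[M] likewise with coefficients in trop.\<close>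

definition is_ideal :: "'a::comm_ring_1 set \<Rightarrow> bool" where
  "is_ideal I \<longleftrightarrow> 0 \<in> I \<and> (\<forall>x\<in>I. \<forall>y\<in>I. x + y \<in> I) \<and> (\<forall>x\<in>I. \<forall>r. r * x \<in> I)"

definition trop_poly :: "('k::field \<Rightarrow> trop) \<Rightarrow> ('m \<Rightarrow>\<^sub>0 'k) \<Rightarrow> ('m \<Rightarrow>\<^sub>0 trop)" where
  "trop_poly v f = Poly_Mapping.map v f"

definition bend_relations ::
  "('k::field \<Rightarrow> trop) \<Rightarrow> ('m::comm_monoid_add \<Rightarrow>\<^sub>0 'k) set \<Rightarrow> (('m \<Rightarrow>\<^sub>0 trop) \<times> ('m \<Rightarrow>\<^sub>0 trop)) set" where
  "bend_relations v I =
     {(trop_poly v f, trop_poly v (f - Poly_Mapping.single m (Poly_Mapping.lookup f m))) | f m.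
        f \<in> I \<and> m \<in> Poly_Mapping.keys f}"

inductive cong_gen :: "('a \<times> 'a) set \<Rightarrow> 'a::comm_semiring_1 \<Rightarrow> 'a \<Rightarrow> bool"
  for R where
  base: "(x, y) \<in> R \<Longrightarrow> cong_gen R x y"
| refl: "cong_gen R x x"
| sym: "cong_gen R x y \<Longrightarrow> cong_gen R y x"
| trans: "cong_gen R x y \<Longrightarrow> cong_gen R y z \<Longrightarrow> cong_gen R x z"
| add: "cong_gen R x y \<Longrightarrow> cong_gen R (x + z) (y + z)"
| mult: "cong_gen R x y \<Longrightarrow> cong_gen R (x * z) (y * z)"

text \<open>Equality in A = T[M] / (bend relations of I).\<close>
definition trop_eq ::
  "('k::field \<Rightarrow> trop) \<Rightarrow> ('m::comm_monoid_add \<Rightarrow>\<^sub>0 'k) set \<Rightarrow> ('m \<Rightarrow>\<^sub>0 trop) \<Rightarrow> ('m \<Rightarrow>\<^sub>0 trop) \<Rightarrow> bool" where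
  "trop_eq v I = cong_gen (bend_relations v I)"

end

theory Submission
  imports Defs
begin

lemma trop_add_zero_iff: "(a::trop) + b = 0 \<longleftrightarrow> a = 0 \<and> b = 0"
  by (cases a; cases b) (auto simp: plus_trop_def zero_trop_def max_def)

lemma trop_mult_zero_iff: "(a::trop) * b = 0 \<longleftrightarrow> a = 0 \<or> b = 0"
  by (cases a; cases b) (auto simp: zero_trop_def)

lemma trop_sum_zero: "finite A \<Longrightarrow> sum (f::'a \<Rightarrow> trop) A = 0 \<Longrightarrow> \<forall>a\<in>A. f a = 0"
  by (induction A rule: finite_induct) (auto simp: trop_add_zero_iff)

lemma pm_add_zero: "(x::'m \<Rightarrow>\<^sub>0 trop) + z = 0 \<longleftrightarrow> x = 0 \<and> z = 0"
proof
  assume h: "x + z = 0"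
  have l: "Poly_Mapping.lookup x k = 0 \<and> Poly_Mapping.lookup z k = 0" for k
  proof -
    have "Poly_Mapping.lookup (x + z) k = 0" using h by simp
    then have "Poly_Mapping.lookup x k + Poly_Mapping.lookup z k = 0" by (simp only: lookup_add)
    then show ?thesis by (simp only: trop_add_zero_iff)
  qed
  have "x = 0" by (rule poly_mapping_eqI) (simp add: l)
  moreover have "z = 0" by (rule poly_mapping_eqI) (simp add: l)
  ultimately show "x = 0 \<and> z = 0" by simp
qed simp

lemma pm_mult_nz:
  fixes x z :: "'m::comm_monoid_add \<Rightarrow>\<^sub>0 trop"
  assumes "x \<noteq> 0" "z \<noteq> 0"
  shows "x * z \<noteq> 0"
proof
  assume h: "x * z = 0"
  obtain a where a: "Poly_Mapping.lookup x a \<noteq> 0" using assms(1)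
    by (metis in_keys_iff keys_eq_empty ex_in_conv)
  obtain b where b: "Poly_Mapping.lookup z b \<noteq> 0" using assms(2)
    by (metis in_keys_iff keys_eq_empty ex_in_conv)
  let ?k = "a + b"
  let ?g = "\<lambda>(c, d). Poly_Mapping.lookup x c * Poly_Mapping.lookup z d when ?k = c + d"
  have e: "Poly_Mapping.lookup (x * z) ?k = prod_fun (Poly_Mapping.lookup x) (Poly_Mapping.lookup z) ?k"
    by transfer simp
  have fx: "finite {a. Poly_Mapping.lookup x a \<noteq> 0}" "finite {a. Poly_Mapping.lookup z a \<noteq> 0}"
    using finite_keys[of x] finite_keys[of z] by (simp_all add: keys.rep_eq)
  have e2: "Poly_Mapping.lookup (x * z) ?k = Sum_any ?g"
    using e prod_fun_unfold_prod[OF fx] by simp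
  have sub: "{p. ?g p \<noteq> 0} \<subseteq> {a. Poly_Mapping.lookup x a \<noteq> 0} \<times> {a. Poly_Mapping.lookup z a \<noteq> 0}"
    by (auto simp: when_def trop_mult_zero_iff split: if_splits)
  have fin: "finite {p. ?g p \<noteq> 0}"
    using finite_subset[OF sub] fx by blast
  have "Sum_any ?g = sum ?g {p. ?g p \<noteq> 0}"
    by (rule Sum_any.expand_set)
  then have "sum ?g {p. ?g p \<noteq> 0} = 0" using h e2 by simp
  then have all: "\<forall>p\<in>{p. ?g p \<noteq> 0}. ?g p = 0" by (rule trop_sum_zero[OF fin])
  have "?g (a, b) = 0"
  proof (rule ccontr)
    assume nz: "?g (a, b) \<noteq> 0"
    then have "(a, b) \<in> {p. ?g p \<noteq> 0}" by (rule CollectI)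
    from bspec[OF all this] nz show False by simp
  qed
  then have "Poly_Mapping.lookup x a * Poly_Mapping.lookup z b = 0" by (simp add: when_def)
  then show False using a b trop_mult_zero_iff by blast
qed

lemma pm_mult_zero:
  fixes x z :: "'m::comm_monoid_add \<Rightarrow>\<^sub>0 trop"
  shows "x * z = 0 \<longleftrightarrow> x = 0 \<or> z = 0"
  using pm_mult_nz by fastforce

lemma cong_zero:
  assumes "cong_gen R x y"
    and "\<forall>(a, b)\<in>R. (a = 0 \<longleftrightarrow> b = (0::'m::comm_monoid_add \<Rightarrow>\<^sub>0 trop))"
  shows "x = 0 \<longleftrightarrow> y = 0"
  using assms
  by (induction rule: cong_gen.induct) (auto simp: pm_add_zero pm_mult_zero)

theorem proposition5p8:
  fixes v :: "'k::field \<Rightarrow> trop"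
    and I :: "('m::comm_monoid_add \<Rightarrow>\<^sub>0 'k) set"
  assumes "valuation v"
    and "is_ideal I"
    and "\<forall>m. Poly_Mapping.single m 1 \<notin> I"
  shows "(\<forall>x y. trop_eq v I (x * y) 0 \<longrightarrow> trop_eq v I x 0 \<or> trop_eq v I y 0)
       \<and> (\<forall>x y. (\<exists>n. trop_eq v I ((x * y) ^ n) 0) \<longrightarrow>
                 (\<exists>n. trop_eq v I (x ^ n) 0) \<or> (\<exists>n. trop_eq v I (y ^ n) 0))"
proof -
  have tp0: "trop_poly v f = 0 \<longleftrightarrow> f = 0" for f
    using assms(1) unfolding trop_poly_def valuation_def
    by (auto simp: map_eq_zero_iff zero_trop_def in_keys_iff intro: poly_mapping_eqI)
  have R: "\<forall>(a, b)\<in>bend_relations v I. (a = 0 \<longleftrightarrow> b = 0)"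
  proof (clarsimp simp: bend_relations_def)
    fix f m
    assume f: "f \<in> I" and m: "m \<in> Poly_Mapping.keys f"
    have fnz: "f \<noteq> 0" using m by auto
    have gnz: "f - Poly_Mapping.single m (Poly_Mapping.lookup f m) \<noteq> 0"
    proof
      assume "f - Poly_Mapping.single m (Poly_Mapping.lookup f m) = 0"
      then have fe: "f = Poly_Mapping.single m (Poly_Mapping.lookup f m)" by simp
      have c: "Poly_Mapping.lookup f m \<noteq> 0" using m by (simp add: in_keys_iff)
      have "Poly_Mapping.single 0 (inverse (Poly_Mapping.lookup f m)) * f \<in> I"
        using assms(2) f unfolding is_ideal_def by blast
      also have "Poly_Mapping.single 0 (inverse (Poly_Mapping.lookup f m)) * f = Poly_Mapping.single m 1"
        by (subst fe) (simp add: mult_single c)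
      finally show False using assms(3) by blast
    qed
    show "(trop_poly v f = 0) = (trop_poly v (f - Poly_Mapping.single m (Poly_Mapping.lookup f m)) = 0)"
      using fnz gnz tp0 by blast
  qed
  have key: "trop_eq v I x 0 \<longleftrightarrow> x = 0" for x
  proof
    assume "trop_eq v I x 0"
    then have "cong_gen (bend_relations v I) x 0" by (simp add: trop_eq_def)
    from cong_zero[OF this R] show "x = 0" by simp
  next
    assume "x = 0"
    then show "trop_eq v I x 0" by (simp add: trop_eq_def cong_gen.refl)
  qed
  show ?thesis
  proof (intro conjI allI impI)
    fix x y :: "'m \<Rightarrow>\<^sub>0 trop"
    assume "trop_eq v I (x * y) 0"
    then have "x * y = 0" by (simp add: key)
    then show "trop_eq v I x 0 \<or> trop_eq v I y 0" by (simp add: key pm_mult_zero)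
  next
    fix x y :: "'m \<Rightarrow>\<^sub>0 trop"
    assume "\<exists>n. trop_eq v I ((x * y) ^ n) 0"
    then obtain n where "(x * y) ^ n = 0" using key by blast
    then have "x ^ n * y ^ n = 0" by (simp add: power_mult_distrib)
    then have "x ^ n = 0 \<or> y ^ n = 0" by (simp add: pm_mult_zero)
    then show "(\<exists>n. trop_eq v I (x ^ n) 0) \<or> (\<exists>n. trop_eq v I (y ^ n) 0)"
      using key by blast
  qed
qed

end
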